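(* Let $K$ be a compact Hausdorff space without isolated points. Then the pair $(C(K),m_0(K))$ has the Daugavet property, where $C(K)$ is regarded as a subspace of $m_0(K)$ via the quotient map $\ell_\infty(K)\to m_0(K)$.
   Context: For a compact Hausdorff space $K$: $\ell_\infty(K)$ is the space of bounded real functions on $K$ with the sup norm; $m(K)=\{f\in\ell_\infty(K): \mathrm{supp}(f)\text{ is a first category set in }K\}$; $m_0(K)=\ell_\infty(K)/m(K)$ with the quotient norm; the quotient map restricted to $C(K)$ is an isometric embedding. If $X$ is a closed subspace of a Banach space $Y$ with inclusion $J$, the pair $(X,Y)$ has the Daugavet property if every bounded rank-one linear operator $T:X\to Y$ satisfies $\|J+T\|=1+\|T\|$. *)

theory Defs
  imports "HOL-Analysis.Analysis"
begin

definition ell_inf :: "('a::topological_space \<Rightarrow> real) set" where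
  "ell_inf = {f. bounded (range f)}"

definition supnorm :: "('a \<Rightarrow> real) \<Rightarrow> real" where
  "supnorm f = (SUP x. \<bar>f x\<bar>)"

definition nowhere_dense :: "'a::topological_space set \<Rightarrow> bool" where
  "nowhere_dense S \<longleftrightarrow> interior (closure S) = {}"

definition first_category :: "'a::topological_space set \<Rightarrow> bool" where
  "first_category S \<longleftrightarrow>
     (\<exists>F. countable F \<and> (\<forall>N\<in>F. nowhere_dense N) \<and> S \<subseteq> \<Union>F)"

definition fsupp :: "('a \<Rightarrow> real) \<Rightarrow> 'a set" where
  "fsupp f = {x. f x \<noteq> 0}"

definition m_space :: "('a::topological_space \<Rightarrow> real) set" where
  "m_space = {f \<in> ell_inf. first_category (fsupp f)}"

text \<open>Quotient norm of the class of f in m_0(K) = l_infinity(K)/m(K).\<close>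
definition qnorm :: "('a::topological_space \<Rightarrow> real) \<Rightarrow> real" where
  "qnorm f = Inf {supnorm (f - g) | g. g \<in> m_space}"

text \<open>Operators C(K) -> m_0(K) are represented by lifts T : C(K) -> l_infinity(K)
  (every operator into the quotient has such a lift); T is linear modulo m(K).\<close>
definition lin_mod_m :: "(('a::topological_space \<Rightarrow>\<^sub>C real) \<Rightarrow> ('a \<Rightarrow> real)) \<Rightarrow> bool" where
  "lin_mod_m T \<longleftrightarrow> (\<forall>x. T x \<in> ell_inf) \<and>
     (\<forall>x y a b. T (a *\<^sub>R x + b *\<^sub>R y) - (\<lambda>t. a * T x t + b * T y t) \<in> m_space)"

definition bounded_mod_m :: "(('a::topological_space \<Rightarrow>\<^sub>C real) \<Rightarrow> ('a \<Rightarrow> real)) \<Rightarrow> bool" where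
  "bounded_mod_m T \<longleftrightarrow> (\<exists>B. \<forall>x. qnorm (T x) \<le> B * norm x)"

definition rank_one_mod_m :: "(('a::topological_space \<Rightarrow>\<^sub>C real) \<Rightarrow> ('a \<Rightarrow> real)) \<Rightarrow> bool" where
  "rank_one_mod_m T \<longleftrightarrow> (\<exists>h\<in>ell_inf. h \<notin> m_space \<and>
      (\<forall>x. \<exists>c. T x - (\<lambda>t. c * h t) \<in> m_space) \<and> (\<exists>x. T x \<notin> m_space))"

definition opnorm_mod_m :: "(('a::topological_space \<Rightarrow>\<^sub>C real) \<Rightarrow> ('a \<Rightarrow> real)) \<Rightarrow> real" where
  "opnorm_mod_m T = (SUP x\<in>{x. norm x \<le> 1}. qnorm (T x))"

text \<open>Daugavet property of the pair (C(K), m_0(K)), J = quotient map restricted to C(K).\<close>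
definition daugavet_CK_m0 :: "'a::topological_space itself \<Rightarrow> bool" where
  "daugavet_CK_m0 _ \<longleftrightarrow>
     (\<forall>T :: ('a \<Rightarrow>\<^sub>C real) \<Rightarrow> ('a \<Rightarrow> real).
        lin_mod_m T \<and> bounded_mod_m T \<and> rank_one_mod_m T \<longrightarrow>
        (SUP x\<in>{x. norm x \<le> 1}. qnorm (\<lambda>t. apply_bcontfun x t + T x t))
          = 1 + opnorm_mod_m T)"

end

theory Submission
  imports Defs
begin

lemma urysohn_pt:
  fixes p :: "'a::t2_space"
  assumes K: "compact (UNIV::'a set)" and V: "open V" "p \<in> V"
  shows "\<exists>u::'a\<Rightarrow>real. continuous_on UNIV u \<and> (\<forall>t. 0 \<le> u t \<and> u t \<le> 1) \<and> u p = 1 \<and> (\<forall>t. t \<notin> V \<longrightarrow> u t = 0)"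
proof -
  have H: "Hausdorff_space (euclidean :: 'a topology)"
    unfolding Hausdorff_space_def disjnt_def by (metis hausdorff open_openin)
  have C: "compact_space (euclidean :: 'a topology)"
    using K by (simp add: compact_space_def)
  have "completely_regular_space (euclidean :: 'a topology)"
    by (meson C H compact_Hausdorff_or_regular_imp_normal_space normal_imp_completely_regular_space)
  moreover have "closedin euclidean (- V)" using V by (simp add: closed_open)
  moreover have "p \<in> topspace euclidean - (- V)" using V by simp
  ultimately obtain f :: "'a \<Rightarrow> real" where f: "continuous_map euclidean (top_of_set {0..1}) f" "f p = 0" "f ` (- V) \<subseteq> {1}"
    unfolding completely_regular_space_def by blast
  have fc: "continuous_on UNIV f" and fr: "\<And>t. f t \<in> {0..1}"
    using f(1) by (auto simp: continuous_map_in_subtopology)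
  have "continuous_on UNIV (\<lambda>t. 1 - f t)" using fc by (intro continuous_intros)
  moreover have "\<forall>t. 0 \<le> 1 - f t \<and> 1 - f t \<le> 1" using fr by auto
  moreover have "\<forall>t. t \<notin> V \<longrightarrow> 1 - f t = 0" using f(3) by auto
  ultimately show ?thesis using f(2) by (intro exI[of _ "\<lambda>t. 1 - f t"]) auto
qed


lemma fc_empty: "first_category {}"
proof -
  have "countable {} \<and> (\<forall>N\<in>{}. nowhere_dense N) \<and> {} \<subseteq> \<Union>{}" by simp
  then show ?thesis unfolding first_category_def by (rule exI)
qed

lemma fc_subset: assumes "first_category S" "T \<subseteq> S" shows "first_category T"
proof -
  obtain F where F: "countable F" "\<forall>N\<in>F. nowhere_dense N" "S \<subseteq> \<Union>F"
    using assms(1) unfolding first_category_def by blast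
  have "countable F \<and> (\<forall>N\<in>F. nowhere_dense N) \<and> T \<subseteq> \<Union>F" using F assms(2) by blast
  then show ?thesis unfolding first_category_def by (rule exI)
qed

lemma fc_nowhere: assumes "nowhere_dense S" shows "first_category S"
proof -
  have "countable {S} \<and> (\<forall>N\<in>{S}. nowhere_dense N) \<and> S \<subseteq> \<Union>{S}" using assms by simp
  then show ?thesis unfolding first_category_def by (rule exI)
qed

lemma fc_Un:
  assumes "first_category S" "first_category T" shows "first_category (S \<union> T)"
proof -
  obtain F where F: "countable F" "\<forall>N\<in>F. nowhere_dense N" "S \<subseteq> \<Union>F"
    using assms(1) unfolding first_category_def by blast
  obtain G where G: "countable G" "\<forall>N\<in>G. nowhere_dense N" "T \<subseteq> \<Union>G"
    using assms(2) unfolding first_category_def by blast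
  have "countable (F \<union> G)" using F(1) G(1) by simp
  moreover have "\<forall>N\<in>F \<union> G. nowhere_dense N" using F(2) G(2) by blast
  moreover have "S \<union> T \<subseteq> \<Union>(F \<union> G)" using F(3) G(3) by blast
  ultimately have "countable (F \<union> G) \<and> (\<forall>N\<in>F \<union> G. nowhere_dense N) \<and> S \<union> T \<subseteq> \<Union>(F \<union> G)"
    by (intro conjI)
  then show ?thesis unfolding first_category_def by (rule exI)
qed

lemma fc_UN:
  assumes "countable I" "\<And>i. i \<in> I \<Longrightarrow> first_category (S i)"
  shows "first_category (\<Union>i\<in>I. S i)"
proof -
  have "\<forall>i\<in>I. \<exists>F. countable F \<and> (\<forall>N\<in>F. nowhere_dense N) \<and> S i \<subseteq> \<Union>F"
    using assms(2) unfolding first_category_def by blast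
  then have "\<exists>F. \<forall>i\<in>I. countable (F i) \<and> (\<forall>N\<in>F i. nowhere_dense N) \<and> S i \<subseteq> \<Union>(F i)"
    by (rule bchoice)
  then obtain F where F: "\<forall>i\<in>I. countable (F i) \<and> (\<forall>N\<in>F i. nowhere_dense N) \<and> S i \<subseteq> \<Union>(F i)"
    by blast
  have F1: "\<And>i. i \<in> I \<Longrightarrow> countable (F i)" using F by simp
  have F2: "\<And>i N. i \<in> I \<Longrightarrow> N \<in> F i \<Longrightarrow> nowhere_dense N" using F by simp
  have F3: "\<And>i. i \<in> I \<Longrightarrow> S i \<subseteq> \<Union>(F i)" using F by simp
  have "countable (\<Union>i\<in>I. F i)" using assms(1) F1 by (rule countable_UN)
  moreover have "\<forall>N\<in>\<Union>i\<in>I. F i. nowhere_dense N" using F2 by blast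
  moreover have "(\<Union>i\<in>I. S i) \<subseteq> \<Union>(\<Union>i\<in>I. F i)" using F3 by blast
  ultimately have "countable (\<Union>i\<in>I. F i) \<and> (\<forall>N\<in>\<Union>i\<in>I. F i. nowhere_dense N) \<and> (\<Union>i\<in>I. S i) \<subseteq> \<Union>(\<Union>i\<in>I. F i)"
    by (intro conjI)
  then show ?thesis unfolding first_category_def by (rule exI)
qed

lemma nowhere_dense_empty: "nowhere_dense {}"
  by (simp add: nowhere_dense_def)

lemma boundary_nowhere_dense:
  assumes "open G" shows "nowhere_dense (closure G - G)"
proof -
  have cl: "closed (closure G - G)" using assms by (simp add: closed_Diff)
  have "interior (closure G - G) = {}"
  proof (rule ccontr)
    assume "interior (closure G - G) \<noteq> {}"
    moreover define Ob where "Ob = interior (closure G - G)"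
    ultimately have Ob: "open Ob" "Ob \<noteq> {}" "Ob \<subseteq> closure G - G"
      using interior_subset[of "closure G - G"] by auto
    then have "Ob \<inter> closure G \<noteq> {}" by auto
    then have "Ob \<inter> G \<noteq> {}" using open_Int_closure_eq_empty[OF Ob(1)] by blast
    then show False using Ob by auto
  qed
  then show ?thesis unfolding nowhere_dense_def using cl by (simp add: closure_closed)
qed

lemma disjoint_union_fc:
  assumes disj: "pairwise disjnt \<V>" and op: "\<And>V. V \<in> \<V> \<Longrightarrow> open V"
    and fc: "\<And>V. V \<in> \<V> \<Longrightarrow> first_category (A \<inter> V)"
  shows "first_category (A \<inter> \<Union>\<V>)"
proof -
  have "\<forall>V\<in>\<V>. \<exists>F. countable F \<and> (\<forall>N\<in>F. nowhere_dense N) \<and> A \<inter> V \<subseteq> \<Union>F"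
    using fc unfolding first_category_def by blast
  then have "\<exists>F. \<forall>V\<in>\<V>. countable (F V) \<and> (\<forall>N\<in>F V. nowhere_dense N) \<and> A \<inter> V \<subseteq> \<Union>(F V)"
    by (rule bchoice)
  then obtain F where F0: "\<forall>V\<in>\<V>. countable (F V) \<and> (\<forall>N\<in>F V. nowhere_dense N) \<and> A \<inter> V \<subseteq> \<Union>(F V)"
    by blast
  have F: "countable (F V) \<and> (\<forall>N\<in>F V. nowhere_dense N) \<and> A \<inter> V \<subseteq> \<Union>(F V)" if "V \<in> \<V>" for V
    using F0 that by blast
  define N where "N V n = from_nat_into (insert {} (F V)) n" for V n
  have rng: "range (N V) = insert {} (F V)" if "V \<in> \<V>" for V
    unfolding N_def using F[OF that] by (intro range_from_nat_into) auto
  have Nnd: "nowhere_dense (N V n)" if "V \<in> \<V>" for V n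
    using rng[OF that] F[OF that] nowhere_dense_empty by (metis insert_iff rangeI)
  have cov: "A \<inter> V \<subseteq> (\<Union>n. N V n)" if "V \<in> \<V>" for V
    using rng[OF that] F[OF that] by auto
  define M where "M n = (\<Union>V\<in>\<V>. N V n \<inter> V)" for n
  have Mnd: "nowhere_dense (M n)" for n
    unfolding nowhere_dense_def
  proof (rule ccontr)
    assume "interior (closure (M n)) \<noteq> {}"
    then obtain t where t: "t \<in> interior (closure (M n))" by blast
    define Ob where "Ob = interior (closure (M n))"
    have Oo: "open Ob" and Osub: "Ob \<subseteq> closure (M n)" unfolding Ob_def by (auto simp: interior_subset)
    have "Ob \<inter> closure (M n) \<noteq> {}" using t Osub unfolding Ob_def by auto
    then have "Ob \<inter> M n \<noteq> {}" using open_Int_closure_eq_empty[OF Oo] by blast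
    then obtain s V where sV: "V \<in> \<V>" "s \<in> Ob" "s \<in> N V n" "s \<in> V" unfolding M_def by blast
    have MV: "M n \<inter> V \<subseteq> N V n"
    proof
      fix r assume "r \<in> M n \<inter> V"
      then obtain V' where "V' \<in> \<V>" "r \<in> N V' n" "r \<in> V'" "r \<in> V" unfolding M_def by blast
      then have "V' = V" using disj sV(1) unfolding pairwise_def disjnt_def by blast
      then show "r \<in> N V n" using \<open>r \<in> N V' n\<close> by simp
    qed
    have "Ob \<inter> V \<subseteq> closure (N V n)"
    proof -
      have "Ob \<inter> V \<subseteq> V \<inter> closure (M n)" using Osub by auto
      also have "\<dots> \<subseteq> closure (V \<inter> M n)" using open_Int_closure_subset op[OF sV(1)] by blast
      also have "\<dots> \<subseteq> closure (N V n)" using MV by (intro closure_mono) auto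
      finally show ?thesis .
    qed
    then have "Ob \<inter> V \<subseteq> interior (closure (N V n))"
      using Oo op[OF sV(1)] by (intro interior_maximal) auto
    then show False using Nnd[OF sV(1)] sV unfolding nowhere_dense_def by auto
  qed
  have "A \<inter> \<Union>\<V> \<subseteq> (\<Union>n. M n)"
  proof
    fix t assume "t \<in> A \<inter> \<Union>\<V>"
    then obtain V where "V \<in> \<V>" "t \<in> A \<inter> V" by blast
    then obtain n where "t \<in> N V n" using cov by blast
    then show "t \<in> (\<Union>n. M n)" unfolding M_def using \<open>V \<in> \<V>\<close> \<open>t \<in> A \<inter> V\<close> by blast
  qed
  moreover have "countable (range M)" by simp
  moreover have "\<forall>N\<in>range M. nowhere_dense N" using Mnd by blast
  ultimately have "countable (range M) \<and> (\<forall>N\<in>range M. nowhere_dense N) \<and> A \<inter> \<Union>\<V> \<subseteq> \<Union>(range M)"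
    by (intro conjI)
  then show ?thesis unfolding first_category_def by (rule exI)
qed

lemma banach_category:
  assumes U: "\<And>U. U \<in> \<U> \<Longrightarrow> open U \<and> first_category (A \<inter> U)"
  shows "first_category (A \<inter> \<Union>\<U>)"
proof -
  define P where "P = {V. open V \<and> V \<noteq> {} \<and> (\<exists>U\<in>\<U>. V \<subseteq> U)}"
  define Fam where "Fam = {\<V>. \<V> \<subseteq> P \<and> pairwise disjnt \<V>}"
  have "\<forall>C\<in>chains Fam. \<Union>C \<in> Fam"
  proof
    fix C assume C: "C \<in> chains Fam"
    then have sub: "C \<subseteq> Fam" and ch: "chain\<^sub>\<subseteq> C" unfolding chains_def by auto
    have "\<Union>C \<subseteq> P" using sub unfolding Fam_def by auto
    moreover have "pairwise disjnt (\<Union>C)"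
      unfolding pairwise_def
    proof (intro ballI impI)
      fix X Y assume X: "X \<in> \<Union>C" and Y: "Y \<in> \<Union>C" and ne: "X \<noteq> Y"
      then obtain CX CY where "CX \<in> C" "CY \<in> C" "X \<in> CX" "Y \<in> CY" by blast
      then have "CX \<subseteq> CY \<or> CY \<subseteq> CX" using ch unfolding chain_subset_def by blast
      then show "disjnt X Y"
        using sub \<open>CX \<in> C\<close> \<open>CY \<in> C\<close> \<open>X \<in> CX\<close> \<open>Y \<in> CY\<close> ne
        unfolding Fam_def pairwise_def by blast
    qed
    ultimately show "\<Union>C \<in> Fam" unfolding Fam_def by blast
  qed
  then obtain \<V> where VF: "\<V> \<in> Fam" and max: "\<And>X. X \<in> Fam \<Longrightarrow> \<V> \<subseteq> X \<Longrightarrow> X = \<V>"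
    using Zorn_Lemma[of Fam] by blast
  define G where "G = \<Union>\<V>"
  have VP: "\<V> \<subseteq> P" and Vd: "pairwise disjnt \<V>" using VF unfolding Fam_def by auto
  have Go: "open G" unfolding G_def using VP unfolding P_def by auto
  have dense: "\<Union>\<U> \<subseteq> closure G"
  proof
    fix t assume "t \<in> \<Union>\<U>"
    then obtain U where U1: "U \<in> \<U>" "t \<in> U" by blast
    show "t \<in> closure G"
    proof (rule ccontr)
      assume nt: "t \<notin> closure G"
      define V' where "V' = U - closure G"
      have V'o: "open V'" unfolding V'_def using U[OF U1(1)] by auto
      have "t \<in> V'" unfolding V'_def using U1 nt by blast
      then have V'P: "V' \<in> P" unfolding P_def using V'o U1(1) unfolding V'_def by blast
      have V'disj: "disjnt V' V" if "V \<in> \<V>" for V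
        using that closure_subset[of G] unfolding V'_def G_def disjnt_def by blast
      have "V' \<notin> \<V>"
      proof
        assume "V' \<in> \<V>"
        then have "V' \<subseteq> G" unfolding G_def by blast
        then show False using U1 nt closure_subset[of G] unfolding V'_def by blast
      qed
      have "pairwise disjnt (insert V' \<V>)"
        using Vd V'disj \<open>V' \<notin> \<V>\<close> unfolding pairwise_insert by (meson disjnt_sym)
      then have "insert V' \<V> \<in> Fam"
        unfolding Fam_def using VP V'P by blast
      then have "insert V' \<V> = \<V>" using max by blast
      then show False using \<open>V' \<notin> \<V>\<close> by blast
    qed
  qed
  have "first_category (A \<inter> G)" unfolding G_def
  proof (rule disjoint_union_fc[OF Vd])
    fix V assume "V \<in> \<V>"
    then have "V \<in> P" using VP by blast
    then show "open V" unfolding P_def by blast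
    from \<open>V \<in> P\<close> obtain U where "U \<in> \<U>" "V \<subseteq> U" unfolding P_def by blast
    then have "first_category (A \<inter> U)" using U by blast
    then show "first_category (A \<inter> V)" by (rule fc_subset) (use \<open>V \<subseteq> U\<close> in blast)
  qed
  moreover have "first_category (closure G - G)"
    by (rule fc_nowhere[OF boundary_nowhere_dense[OF Go]])
  ultimately have "first_category ((A \<inter> G) \<union> (closure G - G))" by (rule fc_Un)
  moreover have "A \<inter> \<Union>\<U> \<subseteq> (A \<inter> G) \<union> (closure G - G)" using dense by blast
  ultimately show ?thesis by (rule fc_subset)
qed

lemma localize:
  assumes "\<not> first_category A"
  shows "\<exists>W. open W \<and> W \<noteq> {} \<and> (\<forall>V. open V \<and> V \<noteq> {} \<and> V \<subseteq> W \<longrightarrow> \<not> first_category (A \<inter> V))"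
proof -
  define \<U> where "\<U> = {U. open U \<and> first_category (A \<inter> U)}"
  define W0 where "W0 = \<Union>\<U>"
  have W0o: "open W0" unfolding W0_def \<U>_def by auto
  have f1: "first_category (A \<inter> W0)" unfolding W0_def by (rule banach_category) (auto simp: \<U>_def)
  have f2: "first_category (closure W0 - W0)" by (rule fc_nowhere[OF boundary_nowhere_dense[OF W0o]])
  define W where "W = - closure W0"
  have Wo: "open W" unfolding W_def by auto
  have "W \<noteq> {}"
  proof
    assume "W = {}"
    then have "A \<subseteq> (A \<inter> W0) \<union> (closure W0 - W0)" unfolding W_def by auto
    then have "first_category A" by (rule fc_subset[OF fc_Un[OF f1 f2]])
    then show False using assms by blast
  qed
  moreover have "\<not> first_category (A \<inter> V)" if "open V" "V \<noteq> {}" "V \<subseteq> W" for V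
  proof
    assume "first_category (A \<inter> V)"
    then have "V \<subseteq> W0" unfolding W0_def \<U>_def using that by blast
    then show False using that closure_subset[of W0] unfolding W_def by blast
  qed
  ultimately show ?thesis using Wo by blast
qed


lemma ell_inf_iff: "f \<in> ell_inf \<longleftrightarrow> (\<exists>B. \<forall>t. \<bar>f t\<bar> \<le> B)"
  unfolding ell_inf_def bounded_iff by auto

lemma ell_infI: "(\<And>t. \<bar>f t\<bar> \<le> B) \<Longrightarrow> f \<in> ell_inf"
  unfolding ell_inf_iff by blast

lemma ell_infE: assumes "f \<in> ell_inf" obtains B where "\<And>t. \<bar>f t\<bar> \<le> B"
  using assms unfolding ell_inf_iff by blast

lemma ell_inf_lin: assumes "f \<in> ell_inf" "g \<in> ell_inf" shows "(\<lambda>t. a * f t + b * g t) \<in> ell_inf"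
proof -
  obtain B1 where B1: "\<And>t. \<bar>f t\<bar> \<le> B1" using assms(1) unfolding ell_inf_iff by blast
  obtain B2 where B2: "\<And>t. \<bar>g t\<bar> \<le> B2" using assms(2) unfolding ell_inf_iff by blast
  have "\<bar>a * f t + b * g t\<bar> \<le> \<bar>a\<bar> * B1 + \<bar>b\<bar> * B2" for t
  proof -
    have "\<bar>a * f t + b * g t\<bar> \<le> \<bar>a\<bar> * \<bar>f t\<bar> + \<bar>b\<bar> * \<bar>g t\<bar>" by (simp add: abs_mult abs_triangle_ineq[THEN order_trans])
    also have "\<dots> \<le> \<bar>a\<bar> * B1 + \<bar>b\<bar> * B2" using B1[of t] B2[of t] by (intro add_mono mult_left_mono) auto
    finally show ?thesis .
  qed
  then show ?thesis by (rule ell_infI)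
qed

lemma supnorm_upper: assumes "f \<in> ell_inf" shows "\<bar>f t\<bar> \<le> supnorm f"
proof -
  obtain B where "\<And>t. \<bar>f t\<bar> \<le> B" using assms unfolding ell_inf_iff by blast
  then have "bdd_above (range (\<lambda>x. \<bar>f x\<bar>))" by (intro bdd_aboveI[of _ B]) auto
  then show ?thesis unfolding supnorm_def by (rule cSUP_upper[OF UNIV_I])
qed

lemma supnorm_least: assumes "\<And>t. \<bar>f t\<bar> \<le> r" shows "supnorm f \<le> r"
  unfolding supnorm_def using assms by (intro cSUP_least) auto

lemma supnorm_nonneg: "f \<in> ell_inf \<Longrightarrow> 0 \<le> supnorm f"
  using supnorm_upper[of f undefined] by linarith

lemma m_ell: "f \<in> m_space \<Longrightarrow> f \<in> ell_inf"
  unfolding m_space_def by blast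

lemma m_fc: "f \<in> m_space \<Longrightarrow> first_category (fsupp f)"
  unfolding m_space_def by blast

lemma m_intro: "f \<in> ell_inf \<Longrightarrow> first_category (fsupp f) \<Longrightarrow> f \<in> m_space"
  unfolding m_space_def by blast

lemma m_lin: assumes "f \<in> m_space" "g \<in> m_space" shows "(\<lambda>t. a * f t + b * g t) \<in> m_space"
proof (rule m_intro)
  show "(\<lambda>t. a * f t + b * g t) \<in> ell_inf" using assms m_ell ell_inf_lin by blast
  have "fsupp (\<lambda>t. a * f t + b * g t) \<subseteq> fsupp f \<union> fsupp g" unfolding fsupp_def by auto
  moreover have "first_category (fsupp f \<union> fsupp g)" using assms m_fc fc_Un by blast
  ultimately show "first_category (fsupp (\<lambda>t. a * f t + b * g t))" using fc_subset by blast
qed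

lemma m_zero: "(\<lambda>t. 0) \<in> m_space"
proof (rule m_intro)
  show "(\<lambda>t. 0) \<in> ell_inf" by (rule ell_infI[of _ 0]) simp
  show "first_category (fsupp (\<lambda>t. 0::real))" unfolding fsupp_def by (simp add: fc_empty)
qed

lemma m_diff: assumes "f \<in> m_space" "g \<in> m_space" shows "f - g \<in> m_space"
proof -
  have "f - g = (\<lambda>t. 1 * f t + (-1) * g t)" by (auto simp: fun_eq_iff)
  then show ?thesis using m_lin[OF assms, of 1 "-1"] by simp
qed

lemma m_scale: assumes "f \<in> m_space" shows "(\<lambda>t. a * f t) \<in> m_space"
  using m_lin[OF assms assms, of a 0] by simp

lemma ell_diff: "f \<in> ell_inf \<Longrightarrow> g \<in> ell_inf \<Longrightarrow> f - g \<in> ell_inf"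
  using ell_inf_lin[of f g 1 "-1"] by (simp add: fun_diff_def)

lemma qset_ne: "{supnorm (f - g) | g. g \<in> m_space} \<noteq> {}"
  using m_zero by blast

lemma qset_bdd: assumes "f \<in> ell_inf" shows "bdd_below {supnorm (f - g) | g. g \<in> m_space}"
proof (rule bdd_belowI[of _ 0])
  fix x assume "x \<in> {supnorm (f - g) | g. g \<in> m_space}"
  then obtain g where "g \<in> m_space" "x = supnorm (f - g)" by blast
  then show "0 \<le> x" using supnorm_nonneg ell_diff assms m_ell by blast
qed

lemma qnorm_le: assumes "f \<in> ell_inf" "g \<in> m_space" shows "qnorm f \<le> supnorm (f - g)"
  unfolding qnorm_def using qset_bdd[OF assms(1)] assms(2) by (intro cInf_lower) auto

lemma qnorm_ge: assumes "\<And>g. g \<in> m_space \<Longrightarrow> r \<le> supnorm (f - g)" shows "r \<le> qnorm f"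
  unfolding qnorm_def using qset_ne[of f] assms by (intro cInf_greatest) auto

lemma qnorm_nonneg: assumes "f \<in> ell_inf" shows "0 \<le> qnorm f"
  using assms by (intro qnorm_ge) (auto intro: supnorm_nonneg ell_diff m_ell)

lemma qnorm_cong: assumes "f - f' \<in> m_space" shows "qnorm f = qnorm f'"
proof -
  have "{supnorm (f - g) | g. g \<in> m_space} = {supnorm (f' - g) | g. g \<in> m_space}"
  proof (intro set_eqI iffI)
    fix x assume "x \<in> {supnorm (f - g) | g. g \<in> m_space}"
    then obtain g where g: "g \<in> m_space" "x = supnorm (f - g)" by blast
    have "g - (f - f') \<in> m_space" using m_diff[OF g(1) assms] .
    moreover have "f - g = f' - (g - (f - f'))" by (simp add: fun_eq_iff)
    ultimately show "x \<in> {supnorm (f' - g) | g. g \<in> m_space}" using g(2)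
      by (intro CollectI exI[of _ "g - (f - f')"] conjI) auto
  next
    fix x assume "x \<in> {supnorm (f' - g) | g. g \<in> m_space}"
    then obtain g where g: "g \<in> m_space" "x = supnorm (f' - g)" by blast
    have "(\<lambda>t. 1 * g t + 1 * (f - f') t) \<in> m_space" using m_lin[OF g(1) assms] .
    moreover have "f' - g = f - (\<lambda>t. 1 * g t + 1 * (f - f') t)" by (auto simp: fun_eq_iff)
    ultimately show "x \<in> {supnorm (f - g) | g. g \<in> m_space}" using g(2)
      by (intro CollectI exI[of _ "(\<lambda>t. 1 * g t + 1 * (f - f') t)"] conjI) auto
  qed
  then show ?thesis unfolding qnorm_def by simp
qed

lemma qnorm_scale_le: assumes "f \<in> ell_inf" shows "qnorm (\<lambda>t. k * f t) \<le> \<bar>k\<bar> * qnorm f"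
proof (cases "k = 0")
  case True
  have "qnorm (\<lambda>t. k * f t) \<le> supnorm ((\<lambda>t. k * f t) - (\<lambda>t. 0))"
    using ell_inf_lin[OF assms assms, of k 0] m_zero by (intro qnorm_le) auto
  also have "\<dots> \<le> 0" using True by (intro supnorm_least) simp
  finally show ?thesis using True by simp
next
  case False
  have "qnorm (\<lambda>t. k * f t) / \<bar>k\<bar> \<le> qnorm f"
  proof (rule qnorm_ge)
    fix g :: "'a \<Rightarrow> real" assume g: "g \<in> m_space"
    have "qnorm (\<lambda>t. k * f t) \<le> supnorm ((\<lambda>t. k * f t) - (\<lambda>t. k * g t))"
      using ell_inf_lin[OF assms assms, of k 0] m_scale[OF g] by (intro qnorm_le) auto
    also have "\<dots> \<le> \<bar>k\<bar> * supnorm (f - g)"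
    proof (rule supnorm_least)
      fix t
      have "\<bar>((\<lambda>t. k * f t) - (\<lambda>t. k * g t)) t\<bar> = \<bar>k\<bar> * \<bar>(f - g) t\<bar>"
        by (simp add: abs_mult right_diff_distrib[symmetric])
      also have "\<dots> \<le> \<bar>k\<bar> * supnorm (f - g)"
        using supnorm_upper[OF ell_diff[OF assms m_ell[OF g]]] by (intro mult_left_mono) auto
      finally show "\<bar>((\<lambda>t. k * f t) - (\<lambda>t. k * g t)) t\<bar> \<le> \<bar>k\<bar> * supnorm (f - g)" .
    qed
    finally show "qnorm (\<lambda>t. k * f t) / \<bar>k\<bar> \<le> supnorm (f - g)"
      using False by (simp add: divide_le_eq mult.commute)
  qed
  then show ?thesis using False by (simp add: divide_le_eq mult.commute)
qed

lemma qnorm_scale: assumes "f \<in> ell_inf" shows "qnorm (\<lambda>t. k * f t) = \<bar>k\<bar> * qnorm f"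
proof (cases "k = 0")
  case True
  then show ?thesis using qnorm_scale_le[OF assms, of k] qnorm_nonneg[of "\<lambda>t. k * f t"]
    ell_inf_lin[OF assms assms, of k 0] by simp
next
  case False
  have kf: "(\<lambda>t. k * f t) \<in> ell_inf" using ell_inf_lin[OF assms assms, of k 0] by simp
  have "qnorm f = qnorm (\<lambda>t. (1/k) * (k * f t))" using False by simp
  also have "\<dots> \<le> \<bar>1/k\<bar> * qnorm (\<lambda>t. k * f t)" by (rule qnorm_scale_le[OF kf])
  finally have "\<bar>k\<bar> * qnorm f \<le> qnorm (\<lambda>t. k * f t)" using False
    by (simp add: field_simps abs_divide)
  then show ?thesis using qnorm_scale_le[OF assms, of k] by simp
qed

lemma qnorm_add: assumes "f1 \<in> ell_inf" "f2 \<in> ell_inf"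
  shows "qnorm (\<lambda>t. f1 t + f2 t) \<le> qnorm f1 + qnorm f2"
proof -
  have s: "(\<lambda>t. f1 t + f2 t) \<in> ell_inf" using ell_inf_lin[OF assms, of 1 1] by simp
  have "qnorm (\<lambda>t. f1 t + f2 t) - supnorm (f2 - g2) \<le> qnorm f1" if g2: "g2 \<in> m_space" for g2 :: "'a \<Rightarrow> real"
  proof (rule qnorm_ge)
    fix g1 :: "'a \<Rightarrow> real" assume g1: "g1 \<in> m_space"
    have "qnorm (\<lambda>t. f1 t + f2 t) \<le> supnorm ((\<lambda>t. f1 t + f2 t) - (\<lambda>t. 1 * g1 t + 1 * g2 t))"
      by (rule qnorm_le[OF s m_lin[OF g1 g2]])
    also have "\<dots> \<le> supnorm (f1 - g1) + supnorm (f2 - g2)"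
    proof (rule supnorm_least)
      fix t
      have "\<bar>((\<lambda>t. f1 t + f2 t) - (\<lambda>t. 1 * g1 t + 1 * g2 t)) t\<bar> \<le> \<bar>(f1 - g1) t\<bar> + \<bar>(f2 - g2) t\<bar>"
        by simp
      also have "\<dots> \<le> supnorm (f1 - g1) + supnorm (f2 - g2)"
        using supnorm_upper[OF ell_diff[OF assms(1) m_ell[OF g1]]] supnorm_upper[OF ell_diff[OF assms(2) m_ell[OF g2]]]
        by (intro add_mono)
      finally show "\<bar>((\<lambda>t. f1 t + f2 t) - (\<lambda>t. 1 * g1 t + 1 * g2 t)) t\<bar> \<le> supnorm (f1 - g1) + supnorm (f2 - g2)" .
    qed
    finally show "qnorm (\<lambda>t. f1 t + f2 t) - supnorm (f2 - g2) \<le> supnorm (f1 - g1)" by simp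
  qed
  then have "qnorm (\<lambda>t. f1 t + f2 t) - qnorm f1 \<le> qnorm f2"
    by (intro qnorm_ge) (simp add: algebra_simps)
  then show ?thesis by simp
qed

lemma qnorm_le_supnorm: "f \<in> ell_inf \<Longrightarrow> qnorm f \<le> supnorm f"
  using qnorm_le[OF _ m_zero, of f] by (simp add: fun_diff_def)

lemma qnorm_pos: assumes "f \<in> ell_inf" "f \<notin> m_space" shows "0 < qnorm f"
proof (rule ccontr)
  assume "\<not> 0 < qnorm f"
  then have q0: "qnorm f \<le> 0" by simp
  have "\<exists>g. g \<in> m_space \<and> supnorm (f - g) < 1 / (real n + 1)" for n
  proof -
    have "Inf {supnorm (f - g) | g. g \<in> m_space} < 1 / (real n + 1)" using q0 unfolding qnorm_def
      by (smt (verit) divide_pos_pos of_nat_less_0_iff)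
    then obtain x where "x \<in> {supnorm (f - g) | g. g \<in> m_space}" "x < 1 / (real n + 1)"
      using cInf_lessD[OF qset_ne] by blast
    then show ?thesis by blast
  qed
  then obtain G where G: "\<And>n. G n \<in> m_space \<and> supnorm (f - G n) < 1 / (real n + 1)" by metis
  have "fsupp f \<subseteq> (\<Union>n\<in>UNIV. fsupp (G n))"
  proof
    fix t assume "t \<in> fsupp f"
    then have ft: "f t \<noteq> 0" unfolding fsupp_def by simp
    obtain n where "inverse (1 + real n) < \<bar>f t\<bar>" using ft reals_Archimedean[of "\<bar>f t\<bar>"] by auto
    then have n: "1 / (real n + 1) < \<bar>f t\<bar>" by (simp add: inverse_eq_divide add.commute)
    have "\<bar>f t - G n t\<bar> \<le> supnorm (f - G n)"
      using supnorm_upper[OF ell_diff[OF assms(1) m_ell], of "G n" t] G[of n] by simp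
    then have "\<bar>f t - G n t\<bar> < \<bar>f t\<bar>" using G[of n] n by linarith
    then have "G n t \<noteq> 0" by auto
    then show "t \<in> (\<Union>n\<in>UNIV. fsupp (G n))" unfolding fsupp_def by blast
  qed
  moreover have "first_category (\<Union>n\<in>UNIV. fsupp (G n))"
    using G m_fc by (intro fc_UN) auto
  ultimately have "first_category (fsupp f)" by (rule fc_subset[rotated])
  then show False using assms m_intro by blast
qed

lemma qnorm_level: assumes "f \<in> ell_inf" "0 \<le> r" "r < qnorm f"
  shows "\<not> first_category {t. r < \<bar>f t\<bar>}"
proof
  assume M: "first_category {t. r < \<bar>f t\<bar>}"
  define g where "g t = (if r < \<bar>f t\<bar> then f t else 0)" for t
  obtain B where B: "\<And>t. \<bar>f t\<bar> \<le> B" using assms(1) unfolding ell_inf_iff by blast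
  have "\<bar>g t\<bar> \<le> B" for t using B[of t] abs_ge_zero[of "f t"] unfolding g_def by auto
  then have "g \<in> ell_inf" by (rule ell_infI)
  moreover have "fsupp g \<subseteq> {t. r < \<bar>f t\<bar>}" unfolding fsupp_def g_def by auto
  ultimately have gm: "g \<in> m_space" using M fc_subset m_intro by blast
  have "qnorm f \<le> supnorm (f - g)" by (rule qnorm_le[OF assms(1) gm])
  also have "\<dots> \<le> r" using assms(2) by (intro supnorm_least) (simp add: g_def)
  finally show False using assms(3) by simp
qed

lemma qnorm_lower: assumes "f \<in> ell_inf" "\<not> first_category {t. r \<le> f t}"
  shows "r \<le> qnorm f"
proof (rule qnorm_ge)
  fix g :: "'a \<Rightarrow> real" assume g: "g \<in> m_space"
  have "\<not> {t. r \<le> f t} \<subseteq> fsupp g"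
    using assms(2) m_fc[OF g] fc_subset by blast
  then obtain t where t: "r \<le> f t" "g t = 0" unfolding fsupp_def by blast
  have "\<bar>(f - g) t\<bar> \<le> supnorm (f - g)" by (rule supnorm_upper[OF ell_diff[OF assms(1) m_ell[OF g]]])
  then show "r \<le> supnorm (f - g)" using t by simp
qed


lemma disjoint_opens:
  fixes W :: "'a::t2_space set" and n :: nat
  assumes perf: "\<forall>x::'a. x islimpt UNIV" and "open W" "W \<noteq> {}"
  shows "\<exists>V. (\<forall>i<n. open (V i) \<and> V i \<noteq> {} \<and> V i \<subseteq> W) \<and> (\<forall>i<n. \<forall>j<n. i \<noteq> j \<longrightarrow> V i \<inter> V j = {})"
  using assms(2,3)
proof (induction n arbitrary: W)
  case 0
  then show ?case by simp
next
  case (Suc n)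
  obtain p where p: "p \<in> W" using Suc.prems by blast
  obtain q where q: "q \<in> W" "q \<noteq> p" using islimptE[OF perf[rule_format, of p] p Suc.prems(1)] by blast
  obtain P Q where PQ: "open P" "open Q" "p \<in> P" "q \<in> Q" "P \<inter> Q = {}" using hausdorff[OF q(2)[symmetric]] by blast
  have WQ: "open (W \<inter> Q)" using Suc.prems(1) PQ(2) by (rule open_Int)
  have WQ2: "W \<inter> Q \<noteq> {}" using q(1) PQ(4) by blast
  then obtain V where V: "\<forall>i<n. open (V i) \<and> V i \<noteq> {} \<and> V i \<subseteq> W \<inter> Q" "\<forall>i<n. \<forall>j<n. i \<noteq> j \<longrightarrow> V i \<inter> V j = {}"
    using Suc.IH[OF WQ WQ2] by blast
  define V' where "V' = V(n := W \<inter> P)"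
  have "\<forall>i<Suc n. open (V' i) \<and> V' i \<noteq> {} \<and> V' i \<subseteq> W"
  proof (intro allI impI)
    fix i assume "i < Suc n"
    then consider "i < n" | "i = n" by linarith
    then show "open (V' i) \<and> V' i \<noteq> {} \<and> V' i \<subseteq> W"
    proof cases
      case 1 then show ?thesis using V(1) unfolding V'_def by auto
    next
      case 2 then show ?thesis using Suc.prems PQ p unfolding V'_def by auto
    qed
  qed
  moreover have "\<forall>i<Suc n. \<forall>j<Suc n. i \<noteq> j \<longrightarrow> V' i \<inter> V' j = {}"
  proof (intro allI impI)
    fix i j assume ij: "i < Suc n" "j < Suc n" "i \<noteq> j"
    show "V' i \<inter> V' j = {}"
    proof (cases "i = n")
      case True
      then have "j < n" using ij by auto
      then have "V j \<subseteq> Q" using V(1) by blast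
      then show ?thesis using True \<open>j < n\<close> PQ(5) unfolding V'_def by auto
    next
      case False
      then have i: "i < n" using ij by auto
      show ?thesis
      proof (cases "j = n")
        case True
        have "V i \<subseteq> Q" using V(1) i by blast
        then show ?thesis using True i PQ(5) unfolding V'_def by auto
      next
        case False
        then show ?thesis using i ij V(2) unfolding V'_def by auto
      qed
    qed
  qed
  ultimately show ?case by blast
qed

lemma apply_bcontfun_sum:
  fixes n :: nat
  shows "apply_bcontfun (\<Sum>i<n. g i) t = (\<Sum>i<n. apply_bcontfun (g i) t)"
  by (induction n) auto

lemma lin_sum:
  fixes c :: "('a::topological_space \<Rightarrow>\<^sub>C real) \<Rightarrow> real" and n :: nat
  assumes lin: "\<And>x y a b. c (a *\<^sub>R x + b *\<^sub>R y) = a * c x + b * c y"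
  shows "c (\<Sum>i<n. s i *\<^sub>R g i) = (\<Sum>i<n. s i * c (g i))"
proof (induction n)
  case 0
  have "c 0 = c (0 *\<^sub>R 0 + 0 *\<^sub>R 0)" by simp
  also have "\<dots> = 0 * c 0 + 0 * c 0" by (rule lin)
  finally show ?case by simp
next
  case (Suc n)
  have "c (\<Sum>i<Suc n. s i *\<^sub>R g i) = c (1 *\<^sub>R (\<Sum>i<n. s i *\<^sub>R g i) + s n *\<^sub>R g n)" by simp
  also have "\<dots> = 1 * c (\<Sum>i<n. s i *\<^sub>R g i) + s n * c (g n)" by (rule lin)
  finally show ?case using Suc by simp
qed

lemma choose_piece:
  fixes c :: "('a::topological_space \<Rightarrow>\<^sub>C real) \<Rightarrow> real"
  assumes lin: "\<And>x y a b. c (a *\<^sub>R x + b *\<^sub>R y) = a * c x + b * c y"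
    and bnd: "\<And>x. \<bar>c x\<bar> \<le> C * norm x" and C0: "0 \<le> C"
    and n: "n > 0"
    and disj: "\<And>i j. i < n \<Longrightarrow> j < n \<Longrightarrow> i \<noteq> j \<Longrightarrow> V i \<inter> V j = {}"
  shows "\<exists>i<n. \<forall>g. norm g \<le> 1 \<and> (\<forall>t. t \<notin> V i \<longrightarrow> apply_bcontfun g t = 0) \<longrightarrow> \<bar>c g\<bar> \<le> C / real n"
proof (rule ccontr)
  assume "\<not> ?thesis"
  then have "\<forall>i. \<exists>g. i < n \<longrightarrow> norm g \<le> 1 \<and> (\<forall>t. t \<notin> V i \<longrightarrow> apply_bcontfun g t = 0) \<and> C / real n < \<bar>c g\<bar>"
    by (auto simp: not_le)
  then have "\<exists>g. \<forall>i. i < n \<longrightarrow> norm (g i) \<le> 1 \<and> (\<forall>t. t \<notin> V i \<longrightarrow> apply_bcontfun (g i) t = 0) \<and> C / real n < \<bar>c (g i)\<bar>"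
    by (rule choice)
  then obtain g where g: "\<And>i. i < n \<Longrightarrow> norm (g i) \<le> 1 \<and> (\<forall>t. t \<notin> V i \<longrightarrow> apply_bcontfun (g i) t = 0) \<and> C / real n < \<bar>c (g i)\<bar>"
    by blast
  define s where "s i = sgn (c (g i))" for i
  define G where "G = (\<Sum>i<n. s i *\<^sub>R g i)"
  have sc: "s i * c (g i) = \<bar>c (g i)\<bar>" for i
    unfolding s_def by (cases "c (g i) > 0"; cases "c (g i) = 0") auto
  have "c G = (\<Sum>i<n. \<bar>c (g i)\<bar>)" unfolding G_def lin_sum[OF lin] sc ..
  also have "\<dots> > (\<Sum>i<n. C / real n)"
    using n g by (intro sum_strict_mono) auto
  also have "(\<Sum>i<n. C / real n) = C" using n by simp
  finally have big: "C < c G" .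
  have "norm G \<le> 1"
  proof (rule norm_bound)
    fix t
    have Gt: "apply_bcontfun G t = (\<Sum>i<n. s i * apply_bcontfun (g i) t)"
      unfolding G_def apply_bcontfun_sum by simp
    show "norm (apply_bcontfun G t) \<le> 1"
    proof (cases "\<exists>j<n. t \<in> V j")
      case True
      then obtain j where j: "j < n" "t \<in> V j" by blast
      have z: "s i * apply_bcontfun (g i) t = 0" if "i \<in> {..<n} - {j}" for i
      proof -
        have "t \<notin> V i" using that j disj[of i j] by auto
        then show ?thesis using g[of i] that by auto
      qed
      have "apply_bcontfun G t = s j * apply_bcontfun (g j) t + (\<Sum>i\<in>{..<n} - {j}. s i * apply_bcontfun (g i) t)"
        unfolding Gt using j by (intro sum.remove) auto
      also have "(\<Sum>i\<in>{..<n} - {j}. s i * apply_bcontfun (g i) t) = 0" using z by (intro sum.neutral) blast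
      finally have "apply_bcontfun G t = s j * apply_bcontfun (g j) t" by simp
      moreover have "\<bar>s j\<bar> \<le> 1" unfolding s_def by (simp add: abs_sgn_eq)
      moreover have "\<bar>apply_bcontfun (g j) t\<bar> \<le> 1"
        using norm_bounded[of "g j" t] g[OF j(1)] by simp
      ultimately show ?thesis by (simp add: abs_mult mult_le_one)
    next
      case False
      have zz: "s i * apply_bcontfun (g i) t = 0" if "i \<in> {..<n}" for i
      proof -
        have "t \<notin> V i" using False that by auto
        then show ?thesis using g[of i] that by auto
      qed
      have "(\<Sum>i<n. s i * apply_bcontfun (g i) t) = 0" using zz by (intro sum.neutral) blast
      then show ?thesis unfolding Gt by simp
    qed
  qed
  then have "C * norm G \<le> C" using C0 by (simp add: mult_left_le)
  then have "\<bar>c G\<bar> \<le> C" using bnd[of G] by linarith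
  then show False using big by simp
qed


lemma bc_ell: "apply_bcontfun (x :: 'a::topological_space \<Rightarrow>\<^sub>C real) \<in> ell_inf"
proof (rule ell_infI)
  fix t show "\<bar>apply_bcontfun x t\<bar> \<le> norm x" using norm_bounded[of x t] by simp
qed

lemma bc_supnorm: "supnorm (apply_bcontfun (x :: 'a::topological_space \<Rightarrow>\<^sub>C real)) \<le> norm x"
proof (rule supnorm_least)
  fix t show "\<bar>apply_bcontfun x t\<bar> \<le> norm x" using norm_bounded[of x t] by simp
qed

theorem mainTheorem9:
  assumes "compact (UNIV :: 'a::t2_space set)"
    and "\<forall>x::'a. x islimpt UNIV"
  shows "daugavet_CK_m0 TYPE('a)"
  unfolding daugavet_CK_m0_def
proof (intro allI impI)
  note K = assms(1) and perf = assms(2)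
  fix T :: "('a \<Rightarrow>\<^sub>C real) \<Rightarrow> ('a \<Rightarrow> real)"
  assume "lin_mod_m T \<and> bounded_mod_m T \<and> rank_one_mod_m T"
  then have lin: "lin_mod_m T" and bd: "bounded_mod_m T" and r1: "rank_one_mod_m T" by auto
  have Tell: "\<And>x. T x \<in> ell_inf" using lin unfolding lin_mod_m_def by blast
  have Tlin: "\<And>x y a b. T (a *\<^sub>R x + b *\<^sub>R y) - (\<lambda>t. a * T x t + b * T y t) \<in> m_space"
    using lin unfolding lin_mod_m_def by blast
  obtain B where B: "\<And>x. qnorm (T x) \<le> B * norm x" using bd unfolding bounded_mod_m_def by blast
  obtain h where h: "h \<in> ell_inf" "h \<notin> m_space" and hc: "\<forall>x. \<exists>c. T x - (\<lambda>t. c * h t) \<in> m_space"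
    using r1 unfolding rank_one_mod_m_def by blast
  from hc have "\<exists>c. \<forall>x. T x - (\<lambda>t. c x * h t) \<in> m_space" by (rule choice)
  then obtain c where c: "\<And>x. T x - (\<lambda>t. c x * h t) \<in> m_space" by blast
  define a where "a = qnorm h"
  have apos: "0 < a" unfolding a_def using qnorm_pos[OF h] .
  have uniq: "k = c x" if k: "T x - (\<lambda>t. k * h t) \<in> m_space" for x k
  proof (rule ccontr)
    assume ne: "k \<noteq> c x"
    have "(T x - (\<lambda>t. k * h t)) - (T x - (\<lambda>t. c x * h t)) \<in> m_space" by (rule m_diff[OF k c])
    moreover have "(T x - (\<lambda>t. k * h t)) - (T x - (\<lambda>t. c x * h t)) = (\<lambda>t. (c x - k) * h t)"
      by (auto simp: fun_eq_iff algebra_simps)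
    ultimately have "(\<lambda>t. (c x - k) * h t) \<in> m_space" by simp
    then have "(\<lambda>t. (1 / (c x - k)) * ((c x - k) * h t)) \<in> m_space" by (rule m_scale)
    moreover have "(\<lambda>t. (1 / (c x - k)) * ((c x - k) * h t)) = h" using ne by (auto simp: fun_eq_iff)
    ultimately show False using h(2) by simp
  qed
  have clin: "c (a *\<^sub>R x + b *\<^sub>R y) = a * c x + b * c y" for a b x y
  proof -
    have m1: "T (a *\<^sub>R x + b *\<^sub>R y) - (\<lambda>t. a * T x t + b * T y t) \<in> m_space" by (rule Tlin)
    have m2: "(\<lambda>t. a * (T x - (\<lambda>t. c x * h t)) t + b * (T y - (\<lambda>t. c y * h t)) t) \<in> m_space"
      by (rule m_lin[OF c c])
    have "(\<lambda>t. 1 * (T (a *\<^sub>R x + b *\<^sub>R y) - (\<lambda>t. a * T x t + b * T y t)) t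
       + 1 * (\<lambda>t. a * (T x - (\<lambda>t. c x * h t)) t + b * (T y - (\<lambda>t. c y * h t)) t) t) \<in> m_space"
      by (rule m_lin[OF m1 m2])
    moreover have "(\<lambda>t. 1 * (T (a *\<^sub>R x + b *\<^sub>R y) - (\<lambda>t. a * T x t + b * T y t)) t
       + 1 * (\<lambda>t. a * (T x - (\<lambda>t. c x * h t)) t + b * (T y - (\<lambda>t. c y * h t)) t) t)
       = T (a *\<^sub>R x + b *\<^sub>R y) - (\<lambda>t. (a * c x + b * c y) * h t)"
      by (auto simp: fun_eq_iff algebra_simps)
    ultimately have "T (a *\<^sub>R x + b *\<^sub>R y) - (\<lambda>t. (a * c x + b * c y) * h t) \<in> m_space" by simp
    then show ?thesis using uniq by metis
  qed
  have qT: "qnorm (T x) = \<bar>c x\<bar> * a" for x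
  proof -
    have "qnorm (T x) = qnorm (\<lambda>t. c x * h t)" by (rule qnorm_cong[OF c])
    also have "\<dots> = \<bar>c x\<bar> * a" unfolding a_def by (rule qnorm_scale[OF h(1)])
    finally show ?thesis .
  qed
  define C where "C = max 0 (B / a)"
  have C0: "0 \<le> C" unfolding C_def by simp
  have cb: "\<bar>c x\<bar> \<le> C * norm x" for x
  proof -
    have "\<bar>c x\<bar> * a \<le> B * norm x" using B[of x] qT[of x] by simp
    then have "\<bar>c x\<bar> \<le> (B / a) * norm x" using apos by (simp add: field_simps)
    also have "\<dots> \<le> C * norm x" unfolding C_def by (intro mult_right_mono) auto
    finally show ?thesis .
  qed
  define S where "S = {x :: 'a \<Rightarrow>\<^sub>C real. norm x \<le> 1}"
  have S0: "(0::'a \<Rightarrow>\<^sub>C real) \<in> S" unfolding S_def by simp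
  have Sne: "S \<noteq> {}" using S0 by blast
  have bddT: "bdd_above ((\<lambda>x. qnorm (T x)) ` S)"
  proof (rule bdd_aboveI2)
    fix x assume "x \<in> S"
    then have nx: "norm x \<le> 1" unfolding S_def by simp
    have "qnorm (T x) \<le> B * norm x" by (rule B)
    also have "\<dots> \<le> \<bar>B\<bar> * norm x" by (intro mult_right_mono) auto
    also have "\<dots> \<le> \<bar>B\<bar>" using nx by (simp add: mult_left_le)
    finally show "qnorm (T x) \<le> \<bar>B\<bar>" .
  qed
  define N where "N = opnorm_mod_m T"
  have N_def': "N = (SUP x\<in>S. qnorm (T x))" unfolding N_def opnorm_mod_m_def S_def ..
  have Nup: "qnorm (T x) \<le> N" if "x \<in> S" for x
    unfolding N_def' by (rule cSUP_upper[OF that bddT])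
  have upper: "qnorm (\<lambda>t. apply_bcontfun x t + T x t) \<le> 1 + N" if "x \<in> S" for x
  proof -
    have "qnorm (\<lambda>t. apply_bcontfun x t + T x t) \<le> qnorm (apply_bcontfun x) + qnorm (T x)"
      by (rule qnorm_add[OF bc_ell Tell])
    moreover have "qnorm (apply_bcontfun x) \<le> 1"
      using qnorm_le_supnorm[OF bc_ell, of x] bc_supnorm[of x] that unfolding S_def by simp
    ultimately show ?thesis using Nup[OF that] by simp
  qed
  have lower: "\<exists>x\<in>S. 1 + N - \<epsilon> < qnorm (\<lambda>t. apply_bcontfun x t + T x t)" if eps: "\<epsilon> > 0" for \<epsilon>
  proof -
    have "N - \<epsilon>/4 < (SUP x\<in>S. qnorm (T x))" using eps unfolding N_def' by simp
    then obtain y0 where y0: "y0 \<in> S" "N - \<epsilon>/4 < qnorm (T y0)"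
      using less_cSUP_iff[OF Sne bddT] by blast
    define \<gamma> where "\<gamma> = \<bar>c y0\<bar>"
    have g0: "0 \<le> \<gamma>" unfolding \<gamma>_def by simp
    have gN: "N - \<epsilon>/4 < \<gamma> * a" using y0(2) qT[of y0] unfolding \<gamma>_def by simp
    have gC: "\<gamma> \<le> C"
    proof -
      have "\<gamma> \<le> C * norm y0" unfolding \<gamma>_def by (rule cb)
      also have "\<dots> \<le> C" using y0(1) C0 unfolding S_def by (simp add: mult_left_le)
      finally show ?thesis .
    qed
    obtain H where H: "\<And>t. \<bar>h t\<bar> \<le> H" using h(1) unfolding ell_inf_iff by blast
    have H0: "0 \<le> H" using H[of undefined] by linarith
    define \<delta> where "\<delta> = min (a/2) (\<epsilon> / (4 * (2 + C)))"
    have d0: "0 < \<delta>" unfolding \<delta>_def using apos eps C0 by simp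
    have da: "\<delta> \<le> a/2" unfolding \<delta>_def by (rule min.cobounded1)
    have dC: "(2 + C) * \<delta> \<le> \<epsilon>/4"
    proof -
      have "\<delta> \<le> \<epsilon> / (4 * (2 + C))" unfolding \<delta>_def by simp
      then have "(2 + C) * \<delta> \<le> (2 + C) * (\<epsilon> / (4 * (2 + C)))" using C0 by (intro mult_left_mono) auto
      also have "\<dots> = \<epsilon>/4" using C0 by (simp add: field_simps)
      finally show ?thesis .
    qed
    have lev: "\<not> first_category {t. a - \<delta> < \<bar>h t\<bar>}"
      using qnorm_level[OF h(1), of "a - \<delta>"] da d0 unfolding a_def by simp
    obtain \<sigma> :: real where sig: "\<sigma> = 1 \<or> \<sigma> = -1" and Anm: "\<not> first_category {t. a - \<delta> < \<sigma> * h t}"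
    proof -
      have "{t. a - \<delta> < \<bar>h t\<bar>} = {t. a - \<delta> < 1 * h t} \<union> {t. a - \<delta> < (-1) * h t}" by auto
      then have "\<not> (first_category {t. a - \<delta> < 1 * h t} \<and> first_category {t. a - \<delta> < (-1) * h t})"
        using lev fc_Un by metis
      then show ?thesis using that by blast
    qed
    have sig2: "\<sigma> * \<sigma> = 1" using sig by auto
    define A where "A = {t. a - \<delta> < \<sigma> * h t}"
    obtain W where W: "open W" "W \<noteq> {}" and Wloc: "\<And>V. open V \<Longrightarrow> V \<noteq> {} \<Longrightarrow> V \<subseteq> W \<Longrightarrow> \<not> first_category (A \<inter> V)"
      using localize[OF Anm] unfolding A_def by blast
    define n :: nat where "n = nat \<lceil>8 * C * H / \<epsilon>\<rceil> + 1"
    have n0: "0 < n" unfolding n_def by simp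
    have nbig: "8 * C * H / \<epsilon> < real n" unfolding n_def by linarith
    obtain V where V: "\<forall>i<n. open (V i) \<and> V i \<noteq> {} \<and> V i \<subseteq> W" and Vd: "\<forall>i<n. \<forall>j<n. i \<noteq> j \<longrightarrow> V i \<inter> V j = {}"
      using disjoint_opens[OF perf W] by blast
    obtain i where i: "i < n" and ismall: "\<forall>g. norm g \<le> 1 \<and> (\<forall>t. t \<notin> V i \<longrightarrow> apply_bcontfun g t = 0) \<longrightarrow> \<bar>c g\<bar> \<le> C / real n"
      using choose_piece[OF clin cb C0 n0, of V] Vd by blast
    have Vi: "open (V i)" "V i \<noteq> {}" "V i \<subseteq> W" using V i by auto
    obtain p where p: "p \<in> V i" using Vi(2) by blast
    obtain u :: "'a \<Rightarrow> real" where u: "continuous_on UNIV u" "\<And>t. 0 \<le> u t \<and> u t \<le> 1" "u p = 1" "\<And>t. t \<notin> V i \<Longrightarrow> u t = 0"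
      using urysohn_pt[OF K Vi(1) p] by blast
    define y1 where "y1 = (if 0 \<le> \<sigma> * c y0 then y0 else - y0)"
    have cneg: "c (- y0) = - c y0"
    proof -
      have "c ((-1) *\<^sub>R y0 + 0 *\<^sub>R y0) = (-1) * c y0 + 0 * c y0" by (rule clin)
      then show ?thesis by simp
    qed
    have gy1: "\<sigma> * c y1 = \<gamma>" unfolding y1_def \<gamma>_def using sig cneg by (auto simp: abs_if)
    have ny1: "norm y1 \<le> 1" using y0(1) unfolding y1_def S_def by auto
    have y1b: "\<bar>apply_bcontfun y1 t\<bar> \<le> 1" for t using norm_bounded[of y1 t] ny1 by simp
    define xf where "xf t = u t + (1 - u t) * apply_bcontfun y1 t" for t
    have xfb: "\<bar>xf t\<bar> \<le> 1" and xflow: "2 * u t - 1 \<le> xf t" for t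
    proof -
      have "\<bar>(1 - u t) * apply_bcontfun y1 t\<bar> \<le> (1 - u t) * 1"
        unfolding abs_mult using u(2)[of t] y1b[of t] by (intro mult_mono) auto
      then show "\<bar>xf t\<bar> \<le> 1" "2 * u t - 1 \<le> xf t" using u(2)[of t] unfolding xf_def by (simp_all add: abs_le_iff)
    qed
    have xfc: "continuous_on UNIV xf" unfolding xf_def using u(1) by (intro continuous_intros) auto
    have xfB: "xf \<in> bcontfun" using xfc xfb by (intro bcontfun_normI) auto
    define x where "x = Bcontfun xf"
    have xa: "apply_bcontfun x = xf" unfolding x_def using xfB by (rule Bcontfun_inverse)
    have xS: "x \<in> S" unfolding S_def using xfb by (simp add: norm_bound xa)
    define g where "g = (1/2) *\<^sub>R x + (-1/2) *\<^sub>R y1"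
    have ga: "apply_bcontfun g t = (1/2) * (xf t - apply_bcontfun y1 t)" for t
      unfolding g_def by (simp add: xa algebra_simps)
    have gn: "norm g \<le> 1"
    proof (rule norm_bound)
      fix t show "norm (apply_bcontfun g t) \<le> 1" using xfb[of t] y1b[of t] unfolding ga by simp
    qed
    have gz: "\<forall>t. t \<notin> V i \<longrightarrow> apply_bcontfun g t = 0" using u(4) unfolding ga xf_def by simp
    have "\<bar>c g\<bar> \<le> C / real n" using ismall gn gz by blast
    moreover have "c g = (1/2) * c x + (-1/2) * c y1" unfolding g_def by (rule clin)
    ultimately have cdiff: "\<bar>c x - c y1\<bar> \<le> 2 * C / real n" by simp
    define U where "U = V i \<inter> {t. 1 - \<delta> < u t}"
    have Uo: "open U" unfolding U_def using Vi(1) u(1) by (intro open_Int open_Collect_less) (auto intro: continuous_intros)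
    have pU: "p \<in> U" unfolding U_def using p u(3) d0 by simp
    have "\<not> first_category (A \<inter> U)" using Wloc[OF Uo] pU Vi(3) unfolding U_def by blast
    define f where "f t = apply_bcontfun x t + c x * h t" for t
    have fell: "f \<in> ell_inf" using ell_inf_lin[OF bc_ell h(1), of 1 x "c x"] unfolding f_def by simp
    define r where "r = 1 - 2 * \<delta> + \<gamma> * (a - \<delta>) - (2 * C / real n) * H"
    have fr: "r \<le> f t" if t: "t \<in> A \<inter> U" for t
    proof -
      define \<eta> where "\<eta> = \<sigma> * h t"
      define e where "e = \<sigma> * c x - \<gamma>"
      have eta1: "a - \<delta> < \<eta>" using t unfolding A_def \<eta>_def by simp
      have eta2: "\<eta> \<le> H" using H[of t] sig unfolding \<eta>_def by auto
      have ee: "\<bar>e\<bar> \<le> 2 * C / real n"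
      proof -
        have "e = \<sigma> * (c x - c y1)" unfolding e_def using gy1 by (simp add: algebra_simps)
        then have "\<bar>e\<bar> = \<bar>c x - c y1\<bar>" using sig by auto
        then show ?thesis using cdiff by simp
      qed
      have prod: "c x * h t = (\<gamma> + e) * \<eta>" unfolding e_def \<eta>_def using sig2
        by (simp add: algebra_simps)
      have p1: "\<gamma> * (a - \<delta>) \<le> \<gamma> * \<eta>" using g0 eta1 by (intro mult_left_mono) auto
      have eta0: "0 \<le> \<eta>" using eta1 da apos by linarith
      have p2: "- (2 * C / real n) * H \<le> e * \<eta>"
      proof -
        have "\<bar>e * \<eta>\<bar> \<le> (2 * C / real n) * H"
          unfolding abs_mult using ee eta2 eta0 by (intro mult_mono) auto
        then show ?thesis by linarith
      qed
      have ux: "1 - 2 * \<delta> < xf t"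
      proof -
        have "1 - \<delta> < u t" using t unfolding U_def by simp
        then show ?thesis using xflow[of t] by linarith
      qed
      have "f t = xf t + (\<gamma> * \<eta> + e * \<eta>)" unfolding f_def xa prod by (simp add: algebra_simps)
      then show ?thesis unfolding r_def using ux p1 p2 by linarith
    qed
    have "\<not> first_category {t. r \<le> f t}"
    proof
      assume "first_category {t. r \<le> f t}"
      moreover have "A \<inter> U \<subseteq> {t. r \<le> f t}" using fr by blast
      ultimately have "first_category (A \<inter> U)" by (rule fc_subset)
      then show False using \<open>\<not> first_category (A \<inter> U)\<close> by blast
    qed
    then have rq: "r \<le> qnorm f" by (rule qnorm_lower[OF fell])
    have "qnorm (\<lambda>t. apply_bcontfun x t + T x t) = qnorm f"
    proof (rule qnorm_cong)
      have "(\<lambda>t. apply_bcontfun x t + T x t) - f = T x - (\<lambda>t. c x * h t)" unfolding f_def by (auto simp: fun_eq_iff)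
      then show "(\<lambda>t. apply_bcontfun x t + T x t) - f \<in> m_space" using c[of x] by simp
    qed
    moreover have "1 + N - \<epsilon> < r"
    proof -
      have t1: "(2 * C / real n) * H < \<epsilon> / 4"
      proof -
        have "8 * C * H < real n * \<epsilon>" using nbig eps by (simp add: divide_less_eq mult.commute)
        then show ?thesis using n0 by (simp add: field_simps)
      qed
      have t2: "(2 + \<gamma>) * \<delta> \<le> \<epsilon> / 4" using dC gC d0 by (smt (verit) mult_right_mono)
      have "r = 1 + \<gamma> * a - (2 + \<gamma>) * \<delta> - (2 * C / real n) * H" unfolding r_def by (simp add: algebra_simps)
      then show ?thesis using t1 t2 gN eps by linarith
    qed
    ultimately show ?thesis using xS rq by force
  qed
  have bddU: "bdd_above ((\<lambda>x. qnorm (\<lambda>t. apply_bcontfun x t + T x t)) ` S)"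
    by (rule bdd_aboveI2) (rule upper)
  have "(SUP x\<in>S. qnorm (\<lambda>t. apply_bcontfun x t + T x t)) = 1 + N"
  proof (rule antisym)
    show "(SUP x\<in>S. qnorm (\<lambda>t. apply_bcontfun x t + T x t)) \<le> 1 + N"
      by (rule cSUP_least[OF Sne upper])
    show "1 + N \<le> (SUP x\<in>S. qnorm (\<lambda>t. apply_bcontfun x t + T x t))"
    proof (rule field_le_epsilon)
      fix e :: real assume e: "0 < e"
      obtain x where x: "x \<in> S" "1 + N - e < qnorm (\<lambda>t. apply_bcontfun x t + T x t)"
        using lower[OF e] by blast
      have "qnorm (\<lambda>t. apply_bcontfun x t + T x t) \<le> (SUP x\<in>S. qnorm (\<lambda>t. apply_bcontfun x t + T x t))"
        by (rule cSUP_upper[OF x(1) bddU])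
      then show "1 + N \<le> (SUP x\<in>S. qnorm (\<lambda>t. apply_bcontfun x t + T x t)) + e" using x(2) by simp
    qed
  qed
  then show "(SUP x\<in>{x. norm x \<le> 1}. qnorm (\<lambda>t. apply_bcontfun x t + T x t)) = 1 + opnorm_mod_m T"
    unfolding S_def N_def .
qed

end
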